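(* Let $U$ be a countably infinite universe, $\mathcal{C}=(L_1,L_2,\ldots)$ a countably infinite collection of languages over $U$, and let $m^\star_n(L_j)$ be computed by the Noisy Procedure in the context. Suppose that for every $t\in\mathbb{N}$ the set $\{(n',j): m^\star_{n'}(L_j)+1\le t\}$ is finite. Then there exists an algorithm that noisily non-uniformly generates from $\mathcal{C}$ with generation times forming a Pareto-optimal family.
   Context: A language is an infinite subset of $U$; a collection is a sequence of languages (repetitions allowed, entries distinguished by index). For a language $L$ and integer $n\ge0$, an enumeration of $L$ at noise level $n$ is a sequence $x_1,x_2,\ldots$ of elements of $U$ such that every $x\in L$ equals some $x_t$ and $\sum_{t\ge1}\mathbf{1}[x_t\notin L]\le n$. A generating algorithm at each time $t\ge1$ receives $x_1,\ldots,x_t$ and outputs $z_t\in U$; $S_t$ is the set of distinct strings among $x_1,\ldots,x_t$. For a set $T$, language $L$ and integer $a\ge0$, $T$ is $a$-contained in $L$ if $\sum_{x\in T}\mathbf{1}[x\notin L]\le a$. An algorithm noisily non-uniformly generates from $\mathcal{C}$ with (finite) generation times $t_n(L_i)$ if for all $n\ge0$, $i\ge1$ and every enumeration of $L_i$ at noise level $n$, $z_t\in L_i\setminus S_t$ whenever $|S_t|\ge t_n(L_i)$; for an algorithm $\mathcal{G}$, $t_{n,\mathcal{G}}(L_i)$ is the least such value ($\infty$ if none). A family $(t_n(L_i))_{n\ge0,i\ge1}$ is Pareto-optimal if every algorithm $\mathcal{G}$ that noisily non-uniformly generates from $\mathcal{C}$ and satisfies $t_{n,\mathcal{G}}(L_i)<t_n(L_i)$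 for some pair $(n,i)$ also satisfies $t_{n',\mathcal{G}}(L_j)>t_{n'}(L_j)$ for some other pair $(n',j)$. Diagonal order: pairs $(n,i)$ ordered as $(0,1),(1,1),(0,2),(2,1),(1,2),(0,3),\ldots$, i.e. for $n'=0,1,2,\ldots$ and $h=0,\ldots,n'$ the pair $(n'-h,h+1)$. Each pair $(a,b)$ has an entry $L_{a,b}$, a copy of $L_b$ labelled $(a,b)$. Noisy Procedure. Set $\mathcal{C}'_0=()$. For $l=1,2,\ldots$, let $(n,i)$ be the $l$-th pair; append $L_{n,i}$ to the end of $\mathcal{C}'_{l-1}$ to get $\mathcal{C}'_l=(L'_1,\ldots,L'_l)$, set $j=l$. Repeat: (A) let $T$ be a finite subset of $U$ of largest size for which there is a subcollection $\mathcal{D}$ of the entries $(L'_1,\ldots,L'_j)$ including $L'_j$, such that $T$ is $a$-contained in $L_b$ for every entry $L_{a,b}\in\mathcal{D}$ and $\bigcap_{L_{a,b}\in\mathcal{D}}L_b$ is finite; $m_{\mathrm{chk}}=|T|$ ($0$ if no such $\mathcal{D}$ exists). (B) If $j\le1$ or $m_{\mathrm{chk}}>m^\star_a(L_b)$ where $L'_{j-1}=L_{a,b}$, stop. (C) Otherwise swap positions $j-1$, $j$, set $j\leftarrow j-1$, return to (A). On stopping, set $m^\star_n(L_i)=m_{\mathrm{chk}}$. *)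

theory Defs
  imports Main "HOL-Library.Extended_Nat" "HOL-Library.Countable_Set"
begin

(* Collections are sequences L :: nat => 'u set; only indices i >= 1 are used.
   Enumerations are x :: nat => 'u with x_t = x (t - 1). *)

definition enumeration :: "'u set \<Rightarrow> nat \<Rightarrow> (nat \<Rightarrow> 'u) \<Rightarrow> bool" where
  "enumeration K n x \<longleftrightarrow>
     K \<subseteq> range x \<and> finite {t. x t \<notin> K} \<and> card {t. x t \<notin> K} \<le> n"

definition gen_ok :: "('u list \<Rightarrow> 'u) \<Rightarrow> 'u set \<Rightarrow> nat \<Rightarrow> nat \<Rightarrow> bool" where
  "gen_ok G K n k \<longleftrightarrow>
     (\<forall>x. enumeration K n x \<longrightarrow>
        (\<forall>t\<ge>1. card (x ` {..<t}) \<ge> k \<longrightarrow> G (map x [0..<t]) \<in> K - x ` {..<t}))"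

definition gen_time :: "('u list \<Rightarrow> 'u) \<Rightarrow> (nat \<Rightarrow> 'u set) \<Rightarrow> nat \<Rightarrow> nat \<Rightarrow> enat" where
  "gen_time G L n i =
     (if \<exists>k. gen_ok G (L i) n k then enat (LEAST k. gen_ok G (L i) n k) else \<infinity>)"

definition noisy_generates :: "(nat \<Rightarrow> 'u set) \<Rightarrow> ('u list \<Rightarrow> 'u) \<Rightarrow> bool" where
  "noisy_generates L G \<longleftrightarrow> (\<forall>n i. i \<ge> 1 \<longrightarrow> gen_time G L n i \<noteq> \<infinity>)"

definition generates_with :: "(nat \<Rightarrow> 'u set) \<Rightarrow> ('u list \<Rightarrow> 'u) \<Rightarrow> (nat \<Rightarrow> nat \<Rightarrow> nat) \<Rightarrow> bool" where
  "generates_with L G tm \<longleftrightarrow> (\<forall>n i. i \<ge> 1 \<longrightarrow> gen_ok G (L i) n (tm n i))"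

definition pareto_optimal :: "(nat \<Rightarrow> 'u set) \<Rightarrow> (nat \<Rightarrow> nat \<Rightarrow> nat) \<Rightarrow> bool" where
  "pareto_optimal L tm \<longleftrightarrow>
     (\<forall>(G :: 'u list \<Rightarrow> 'u) n i. noisy_generates L G \<and> i \<ge> 1 \<and> gen_time G L n i < enat (tm n i) \<longrightarrow>
        (\<exists>n' j. j \<ge> 1 \<and> (n', j) \<noteq> (n, i) \<and> gen_time G L n' j > enat (tm n' j)))"

(* Diagonal order: (0,1),(1,1),(0,2),(2,1),(1,2),(0,3),...; diag k is the (k+1)-th pair *)
definition diag_list :: "nat \<Rightarrow> (nat \<times> nat) list" where
  "diag_list N = concat (map (\<lambda>n'. map (\<lambda>h. (n' - h, h + 1)) [0..<Suc n']) [0..<N])"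

definition diag :: "nat \<Rightarrow> nat \<times> nat" where
  "diag k = diag_list (Suc k) ! k"

(* m_chk for the prefix xs = (L'_1,...,L'_j) of entries (a,b) standing for L_{a,b};
   subcollections D are sets of positions containing the last position j *)
definition mchk :: "(nat \<Rightarrow> 'u set) \<Rightarrow> (nat \<times> nat) list \<Rightarrow> nat" where
  "mchk L xs = Max ({card T | T D. finite T \<and> D \<subseteq> {..<length xs} \<and> length xs - 1 \<in> D \<and>
        (\<forall>k\<in>D. card (T - L (snd (xs ! k))) \<le> fst (xs ! k)) \<and>
        finite (\<Inter>k\<in>D. L (snd (xs ! k)))} \<union> {0})"

(* bubble L ms rys p zs: the new entry p sits right after the entries (rev rys)
   and is followed by zs; ms holds the already computed values m*. *)
fun bubble :: "(nat \<Rightarrow> 'u set) \<Rightarrow> (nat \<times> nat \<Rightarrow> nat) \<Rightarrow> (nat \<times> nat) list \<Rightarrow> nat \<times> nat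
                 \<Rightarrow> (nat \<times> nat) list \<Rightarrow> (nat \<times> nat) list \<times> nat" where
  "bubble L ms [] p zs = (p # zs, mchk L [p])"
| "bubble L ms (q # rys) p zs =
     (let c = mchk L (rev (q # rys) @ [p]) in
      if c > ms q then (rev (q # rys) @ p # zs, c)
      else bubble L ms rys p (q # zs))"

(* state after l rounds: (C'_l, m* values computed so far) *)
fun noisy_proc :: "(nat \<Rightarrow> 'u set) \<Rightarrow> nat \<Rightarrow> (nat \<times> nat) list \<times> (nat \<times> nat \<Rightarrow> nat)" where
  "noisy_proc L 0 = ([], (\<lambda>_. 0))"
| "noisy_proc L (Suc l) =
     (let (xs, ms) = noisy_proc L l; p = diag l; (xs', c) = bubble L ms (rev xs) p [] in
      (xs', ms(p := c)))"

definition mstar :: "(nat \<Rightarrow> 'u set) \<Rightarrow> nat \<Rightarrow> nat \<Rightarrow> nat" where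
  "mstar L n i = snd (noisy_proc L (Suc (LEAST l. diag l = (n, i)))) (n, i)"

end

theory Submission
  imports Defs
begin


lemma diag_list_Suc: "diag_list (Suc N) = diag_list N @ map (\<lambda>h. (N - h, h + 1)) [0..<Suc N]"
  by (simp add: diag_list_def)

lemma diag_list_len: "length (diag_list N) \<ge> N"
  by (induction N) (auto simp: diag_list_Suc)

lemma diag_list_prefix: "N \<le> M \<Longrightarrow> \<exists>ys. diag_list M = diag_list N @ ys"
proof (induction M rule: dec_induct)
  case base then show ?case by simp
next
  case (step m) then show ?case by (auto simp: diag_list_Suc)
qed

lemma diag_list_set: "x \<in> set (diag_list N) \<longleftrightarrow> snd x \<ge> 1 \<and> fst x + snd x \<le> N"
proof (induction N)
  case 0 then show ?case by (simp add: diag_list_def)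
next
  case (Suc N)
  obtain a b where x: "x = (a,b)" by force
  have "x \<in> set (map (\<lambda>h. (N - h, h + 1)) [0..<Suc N]) \<longleftrightarrow> b \<ge> 1 \<and> a + b = Suc N"
  proof
    assume "x \<in> set (map (\<lambda>h. (N - h, h + 1)) [0..<Suc N])"
    then show "b \<ge> 1 \<and> a + b = Suc N" using x by auto
  next
    assume h: "b \<ge> 1 \<and> a + b = Suc N"
    then have "x = (N - (b - 1), (b - 1) + 1)" using x by auto
    moreover have "b - 1 \<in> set [0..<Suc N]" using h by auto
    ultimately show "x \<in> set (map (\<lambda>h. (N - h, h + 1)) [0..<Suc N])" by force
  qed
  then show ?case using Suc x by (auto simp: diag_list_Suc)
qed

lemma diag_list_distinct: "distinct (diag_list N)"
proof (induction N)
  case 0 then show ?case by (simp add: diag_list_def)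
next
  case (Suc N)
  have "inj_on (\<lambda>h. (N - h, h + 1)) (set [0..<Suc N])" by (auto simp: inj_on_def)
  then have "distinct (map (\<lambda>h. (N - h, h + 1)) [0..<Suc N])" by (simp add: distinct_map)
  moreover have "set (diag_list N) \<inter> set (map (\<lambda>h. (N - h, h + 1)) [0..<Suc N]) = {}"
    using diag_list_set[of _ N] by auto
  ultimately show ?case using Suc by (simp add: diag_list_Suc)
qed

lemma diag_eq: "k < length (diag_list N) \<Longrightarrow> diag k = diag_list N ! k"
proof -
  assume k: "k < length (diag_list N)"
  have k2: "k < length (diag_list (Suc k))" using diag_list_len[of "Suc k"] by simp
  obtain ys where y1: "diag_list (max N (Suc k)) = diag_list N @ ys" using diag_list_prefix by fastforce
  obtain zs where y2: "diag_list (max N (Suc k)) = diag_list (Suc k) @ zs" using diag_list_prefix by fastforce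
  have "diag_list (max N (Suc k)) ! k = diag_list N ! k" using y1 k by (simp add: nth_append)
  moreover have "diag_list (max N (Suc k)) ! k = diag_list (Suc k) ! k" using y2 k2 by (simp add: nth_append)
  ultimately show ?thesis by (simp add: diag_def)
qed

lemma diag_inj: "inj diag"
proof (rule injI)
  fix a b assume h: "diag a = diag b"
  let ?N = "Suc (max a b)"
  have "a < length (diag_list ?N)" "b < length (diag_list ?N)" using diag_list_len[of ?N] by auto
  then show "a = b" using h diag_eq diag_list_distinct nth_eq_iff_index_eq by metis
qed

lemma diag_surj: "i \<ge> 1 \<Longrightarrow> \<exists>l. diag l = (n, i)"
proof -
  assume "i \<ge> 1"
  then have "(n,i) \<in> set (diag_list (n+i))" by (simp add: diag_list_set)
  then obtain k where "k < length (diag_list (n+i))" "diag_list (n+i) ! k = (n,i)"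
    by (auto simp: in_set_conv_nth)
  then show ?thesis using diag_eq by metis
qed

lemma diag_snd: "snd (diag l) \<ge> 1"
proof -
  have "l < length (diag_list (Suc l))" using diag_list_len[of "Suc l"] by simp
  then have "diag l \<in> set (diag_list (Suc l))" using diag_eq nth_mem by metis
  then show ?thesis by (simp add: diag_list_set)
qed



definition okTD :: "(nat \<Rightarrow> 'u set) \<Rightarrow> 'u set \<Rightarrow> (nat \<times> nat) set \<Rightarrow> bool" where
  "okTD L T D \<longleftrightarrow> finite T \<and> (\<forall>p\<in>D. card (T - L (snd p)) \<le> fst p) \<and> finite (\<Inter>p\<in>D. L (snd p))"

lemma mchk_finite:
  "finite {card T | T D. finite T \<and> D \<subseteq> {..<length xs} \<and> length xs - 1 \<in> D \<and>
        (\<forall>k\<in>D. card (T - L (snd (xs ! k))) \<le> fst (xs ! k)) \<and>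
        finite (\<Inter>k\<in>D. L (snd (xs ! k)))}" (is "finite ?S")
proof -
  let ?N = "(\<Sum>D'\<in>Pow {..<length xs}. card (\<Inter>k\<in>D'. L (snd (xs ! k)))) + (\<Sum>k<length xs. fst (xs ! k))"
  have "?S \<subseteq> {..?N}"
  proof
    fix c assume "c \<in> ?S"
    then obtain T D where c: "c = card T" and T: "finite T" and D: "D \<subseteq> {..<length xs}" "length xs - 1 \<in> D"
      and ca: "\<forall>k\<in>D. card (T - L (snd (xs ! k))) \<le> fst (xs ! k)"
      and fi: "finite (\<Inter>k\<in>D. L (snd (xs ! k)))" by blast
    have fD: "finite D" using D finite_subset by blast
    have sub: "T \<subseteq> (\<Inter>k\<in>D. L (snd (xs ! k))) \<union> (\<Union>k\<in>D. T - L (snd (xs ! k)))" by blast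
    have "card T \<le> card ((\<Inter>k\<in>D. L (snd (xs ! k))) \<union> (\<Union>k\<in>D. T - L (snd (xs ! k))))"
      by (rule card_mono[OF _ sub]) (use fi fD T in auto)
    also have "\<dots> \<le> card (\<Inter>k\<in>D. L (snd (xs ! k))) + card (\<Union>k\<in>D. T - L (snd (xs ! k)))"
      by (rule card_Un_le)
    also have "card (\<Union>k\<in>D. T - L (snd (xs ! k))) \<le> (\<Sum>k\<in>D. card (T - L (snd (xs ! k))))"
      by (rule card_UN_le[OF fD])
    also have "\<dots> \<le> (\<Sum>k\<in>D. fst (xs ! k))" using ca by (intro sum_mono) auto
    also have "\<dots> \<le> (\<Sum>k<length xs. fst (xs ! k))" by (rule sum_mono2) (use D in auto)
    also have "card (\<Inter>k\<in>D. L (snd (xs ! k))) \<le> (\<Sum>D'\<in>Pow {..<length xs}. card (\<Inter>k\<in>D'. L (snd (xs ! k))))"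
      by (rule member_le_sum[where f = "\<lambda>D'. card (\<Inter>k\<in>D'. L (snd (xs ! k)))"]) (use D in auto)
    finally show "c \<in> {..?N}" using c by simp
  qed
  then show ?thesis using finite_subset by blast
qed

lemma mchk_ge:
  assumes "xs \<noteq> []" "D \<subseteq> set xs" "last xs \<in> D" "okTD L T D"
  shows "card T \<le> mchk L xs"
proof -
  define D' where "D' = {k. k < length xs \<and> xs ! k \<in> D}"
  have im: "(\<lambda>k. xs ! k) ` D' = D"
  proof
    show "(\<lambda>k. xs ! k) ` D' \<subseteq> D" by (auto simp: D'_def)
    show "D \<subseteq> (\<lambda>k. xs ! k) ` D'"
    proof
      fix p assume "p \<in> D"
      then obtain k where "k < length xs" "xs ! k = p" using assms(2) \<open>p \<in> D\<close> by (metis in_mono in_set_conv_nth)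
      then show "p \<in> (\<lambda>k. xs ! k) ` D'" using \<open>p \<in> D\<close> by (auto simp: D'_def)
    qed
  qed
  have d2: "length xs - 1 \<in> D'" using assms(1,3) by (simp add: D'_def last_conv_nth)
  have eq: "(\<Inter>k\<in>D'. L (snd (xs ! k))) = (\<Inter>p\<in>D. L (snd p))" using im by auto
  have d1: "D' \<subseteq> {..<length xs}" by (auto simp: D'_def)
  have d3: "\<forall>k\<in>D'. card (T - L (snd (xs ! k))) \<le> fst (xs ! k)" using assms(4) by (auto simp: D'_def okTD_def)
  have d4: "finite (\<Inter>k\<in>D'. L (snd (xs ! k)))" using eq assms(4) by (simp add: okTD_def)
  have fT: "finite T" using assms(4) by (simp add: okTD_def)
  have "card T \<in> {card T | T D. finite T \<and> D \<subseteq> {..<length xs} \<and> length xs - 1 \<in> D \<and>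
        (\<forall>k\<in>D. card (T - L (snd (xs ! k))) \<le> fst (xs ! k)) \<and>
        finite (\<Inter>k\<in>D. L (snd (xs ! k)))}"
    apply (rule CollectI) apply (rule exI[of _ T]) apply (rule exI[of _ D'])
    using d1 d2 d3 d4 fT by simp
  then have "card T \<in> {card T | T D. finite T \<and> D \<subseteq> {..<length xs} \<and> length xs - 1 \<in> D \<and>
        (\<forall>k\<in>D. card (T - L (snd (xs ! k))) \<le> fst (xs ! k)) \<and>
        finite (\<Inter>k\<in>D. L (snd (xs ! k)))} \<union> {0}" by (rule UnI1)
  then show ?thesis unfolding mchk_def by (rule Max_ge[rotated]) (rule finite_UnI[OF mchk_finite], simp)
qed

lemma mchk_obtain:
  assumes "0 < mchk L xs"
  shows "\<exists>T D. D \<subseteq> set xs \<and> xs \<noteq> [] \<and> last xs \<in> D \<and> okTD L T D \<and> card T = mchk L xs"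
proof -
  let ?S = "{card T | T D. finite T \<and> D \<subseteq> {..<length xs} \<and> length xs - 1 \<in> D \<and>
        (\<forall>k\<in>D. card (T - L (snd (xs ! k))) \<le> fst (xs ! k)) \<and>
        finite (\<Inter>k\<in>D. L (snd (xs ! k)))}"
  have "mchk L xs \<in> ?S \<union> {0}" unfolding mchk_def using mchk_finite by (intro Max_in) auto
  then have "mchk L xs \<in> ?S" using assms by auto
  then obtain T D' where c: "mchk L xs = card T" and T: "finite T" and D: "D' \<subseteq> {..<length xs}" "length xs - 1 \<in> D'"
      and ca: "\<forall>k\<in>D'. card (T - L (snd (xs ! k))) \<le> fst (xs ! k)"
      and fi: "finite (\<Inter>k\<in>D'. L (snd (xs ! k)))" by blast
  have ne: "xs \<noteq> []" using D by auto
  define D where "D = (\<lambda>k. xs ! k) ` D'"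
  have "D \<subseteq> set xs" using D by (auto simp: D_def)
  moreover have "last xs \<in> D" using D ne by (auto simp: D_def last_conv_nth)
  moreover have "(\<Inter>k\<in>D'. L (snd (xs ! k))) = (\<Inter>p\<in>D. L (snd p))" by (auto simp: D_def)
  moreover have "\<forall>p\<in>D. card (T - L (snd p)) \<le> fst p" using ca by (auto simp: D_def)
  ultimately have "D \<subseteq> set xs \<and> xs \<noteq> [] \<and> last xs \<in> D \<and> okTD L T D \<and> card T = mchk L xs"
    using ne c T fi unfolding okTD_def by simp
  then show ?thesis by blast
qed

lemma mchk_mono:
  assumes "xs \<noteq> []" "set xs \<subseteq> set ys" "last xs = last ys" "ys \<noteq> []"
  shows "mchk L xs \<le> mchk L ys"
proof (cases "mchk L xs = 0")
  case False
  then have "\<exists>T D. D \<subseteq> set xs \<and> xs \<noteq> [] \<and> last xs \<in> D \<and> okTD L T D \<and> card T = mchk L xs"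
    using mchk_obtain[of L xs] by simp
  then obtain T D where "D \<subseteq> set xs" "last xs \<in> D" "okTD L T D" "card T = mchk L xs"
    by blast
  moreover have "D \<subseteq> set ys" using \<open>D \<subseteq> set xs\<close> assms(2) by blast
  ultimately show ?thesis using mchk_ge[of ys D L T] assms(3,4) by simp
qed simp

lemma bubble_spec:
  "bubble L ms rys p zs = (res, c) \<Longrightarrow> \<exists>A B. rev rys = A @ B \<and> res = A @ p # B @ zs \<and> c = mchk L (A @ [p]) \<and>
     (A \<noteq> [] \<longrightarrow> ms (last A) < c) \<and> (\<forall>j<length B. mchk L (A @ take (Suc j) B @ [p]) \<le> ms (B ! j))"
proof (induction rys arbitrary: zs res c)
  case Nil
  then show ?case by auto
next
  case (Cons q rys)
  define c0 where "c0 = mchk L (rev (q # rys) @ [p])"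
  show ?case
  proof (cases "c0 > ms q")
    case True
    then have "res = rev (q # rys) @ p # zs" "c = c0" using Cons.prems by (auto simp: c0_def Let_def)
    then show ?thesis using True by (intro exI[of _ "rev (q # rys)"] exI[of _ "[]"]) (auto simp: c0_def)
  next
    case False
    note nf = False
    then have "bubble L ms rys p (q # zs) = (res, c)" using Cons.prems by (auto simp: c0_def Let_def)
    from Cons.IH[OF this] obtain A B where AB: "rev rys = A @ B" "res = A @ p # B @ q # zs" "c = mchk L (A @ [p])"
      "A \<noteq> [] \<longrightarrow> ms (last A) < c" "\<forall>j<length B. mchk L (A @ take (Suc j) B @ [p]) \<le> ms (B ! j)" by blast
    have "\<forall>j<length (B @ [q]). mchk L (A @ take (Suc j) (B @ [q]) @ [p]) \<le> ms ((B @ [q]) ! j)"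
    proof (intro allI impI)
      fix j assume j: "j < length (B @ [q])"
      show "mchk L (A @ take (Suc j) (B @ [q]) @ [p]) \<le> ms ((B @ [q]) ! j)"
      proof (cases "j < length B")
        case True then show ?thesis using AB(5) by (simp add: nth_append)
      next
        case False
        then have "j = length B" using j by simp
        then show ?thesis using nf AB(1) c0_def by (simp add: nth_append)
      qed
    qed
    then show ?thesis using AB by (intro exI[of _ A] exI[of _ "B @ [q]"]) auto
  qed
qed



definition xs_at :: "(nat \<Rightarrow> 'u set) \<Rightarrow> nat \<Rightarrow> (nat \<times> nat) list" where
  "xs_at L l = fst (noisy_proc L l)"
definition ms_at :: "(nat \<Rightarrow> 'u set) \<Rightarrow> nat \<Rightarrow> nat \<times> nat \<Rightarrow> nat" where
  "ms_at L l = snd (noisy_proc L l)"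

lemma np_Suc: "noisy_proc L (Suc l) = (fst (bubble L (ms_at L l) (rev (xs_at L l)) (diag l) []),
   (ms_at L l)(diag l := snd (bubble L (ms_at L l) (rev (xs_at L l)) (diag l) [])))"
  by (simp add: xs_at_def ms_at_def Let_def split: prod.split)

lemma step_spec:
  "\<exists>A B c. xs_at L l = A @ B \<and> xs_at L (Suc l) = A @ diag l # B \<and> ms_at L (Suc l) = (ms_at L l)(diag l := c) \<and>
     c = mchk L (A @ [diag l]) \<and> (A \<noteq> [] \<longrightarrow> ms_at L l (last A) < c) \<and>
     (\<forall>j<length B. mchk L (A @ take (Suc j) B @ [diag l]) \<le> ms_at L l (B ! j))"
proof -
  obtain res c where rc: "bubble L (ms_at L l) (rev (xs_at L l)) (diag l) [] = (res, c)" by force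
  from bubble_spec[OF rc] obtain A B where AB: "rev (rev (xs_at L l)) = A @ B" "res = A @ diag l # B @ []"
    "c = mchk L (A @ [diag l])" "A \<noteq> [] \<longrightarrow> ms_at L l (last A) < c"
    "\<forall>j<length B. mchk L (A @ take (Suc j) B @ [diag l]) \<le> ms_at L l (B ! j)" by blast
  have "xs_at L (Suc l) = res" "ms_at L (Suc l) = (ms_at L l)(diag l := c)"
    using np_Suc[of L l] rc by (simp_all add: xs_at_def ms_at_def)
  then show ?thesis using AB by auto
qed

lemma sorted_last: "sorted_wrt R A \<Longrightarrow> (\<And>x. R x x) \<Longrightarrow> a \<in> set A \<Longrightarrow> R a (last A)"
proof -
  assume s: "sorted_wrt R A" and r: "\<And>x. R x x" and a: "a \<in> set A"
  then have ne: "A \<noteq> []" by auto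
  then have eq: "A = butlast A @ [last A]" by simp
  have "sorted_wrt R (butlast A @ [last A])" using s eq by simp
  then have "\<forall>x\<in>set (butlast A). R x (last A)" by (simp add: sorted_wrt_append)
  moreover have "a \<in> set (butlast A) \<or> a = last A" using a eq
    by (metis rotate1.simps(2) set_ConsD set_rotate1)
  ultimately show ?thesis using r by auto
qed

lemma inv:
  "set (xs_at L l) = diag ` {..<l} \<and> distinct (xs_at L l) \<and>
   sorted_wrt (\<lambda>a b. ms_at L l a \<le> ms_at L l b) (xs_at L l) \<and>
   (\<forall>k<length (xs_at L l). \<forall>D T. D \<subseteq> set (take (Suc k) (xs_at L l)) \<and> xs_at L l ! k \<in> D \<and> okTD L T D
       \<longrightarrow> card T \<le> ms_at L l (xs_at L l ! k))"
proof (induction l)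
  case 0
  then show ?case by (simp add: xs_at_def ms_at_def)
next
  case (Suc l)
  define xs where "xs = xs_at L l"
  define ms where "ms = ms_at L l"
  define e where "e = diag l"
  obtain A B c where AB: "xs = A @ B" "xs_at L (Suc l) = A @ e # B" "ms_at L (Suc l) = ms(e := c)"
     "c = mchk L (A @ [e])" "A \<noteq> [] \<longrightarrow> ms (last A) < c"
     "\<forall>j<length B. mchk L (A @ take (Suc j) B @ [e]) \<le> ms (B ! j)"
    using step_spec[of L l] unfolding xs_def ms_def e_def by blast
  have setxs: "set xs = diag ` {..<l}" and dxs: "distinct xs"
    and sxs: "sorted_wrt (\<lambda>a b. ms a \<le> ms b) xs"
    and jxs: "\<forall>k<length xs. \<forall>D T. D \<subseteq> set (take (Suc k) xs) \<and> xs ! k \<in> D \<and> okTD L T D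
       \<longrightarrow> card T \<le> ms (xs ! k)"
    using Suc.IH unfolding xs_def ms_def by auto
  have enot: "e \<notin> set xs" using setxs diag_inj unfolding e_def by (auto simp: inj_eq)
  define ms' where "ms' = ms(e := c)"
  have same: "\<And>x. x \<in> set xs \<Longrightarrow> ms' x = ms x" using enot by (auto simp: ms'_def)
  have ms'e: "ms' e = c" by (simp add: ms'_def)
  have cB: "\<forall>b\<in>set B. c \<le> ms b"
  proof
    fix b assume "b \<in> set B"
    then obtain j where j: "j < length B" "b = B ! j" by (auto simp: in_set_conv_nth)
    have "c \<le> mchk L (A @ take (Suc j) B @ [e])" unfolding AB(4)
      by (rule mchk_mono) (auto simp: set_take_subset)
    then show "c \<le> ms b" using AB(6) j by force
  qed
  have Ac: "\<forall>a\<in>set A. ms a \<le> c"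
  proof
    fix a assume a: "a \<in> set A"
    have "sorted_wrt (\<lambda>a b. ms a \<le> ms b) A" using sxs AB(1) by (simp add: sorted_wrt_append)
    then have "ms a \<le> ms (last A)" using sorted_last[of "\<lambda>a b. ms a \<le> ms b" A a] a by simp
    then show "ms a \<le> c" using AB(5) a by auto
  qed
  have p1: "set (A @ e # B) = diag ` {..<Suc l}"
    using setxs AB(1) by (auto simp: e_def lessThan_Suc)
  have p2: "distinct (A @ e # B)" using dxs enot AB(1) by auto
  have p3: "sorted_wrt (\<lambda>a b. ms' a \<le> ms' b) (A @ e # B)"
  proof -
    have sA: "sorted_wrt (\<lambda>a b. ms a \<le> ms b) A" and sB: "sorted_wrt (\<lambda>a b. ms a \<le> ms b) B"
      and sAB: "\<forall>x\<in>set A. \<forall>y\<in>set B. ms x \<le> ms y"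
      using sxs AB(1) by (simp_all add: sorted_wrt_append)
    have "sorted_wrt (\<lambda>a b. ms' a \<le> ms' b) A"
      by (rule sorted_wrt_mono_rel[OF _ sA]) (use same AB(1) in auto)
    moreover have "sorted_wrt (\<lambda>a b. ms' a \<le> ms' b) B"
      by (rule sorted_wrt_mono_rel[OF _ sB]) (use same AB(1) in auto)
    moreover have "\<forall>y\<in>set B. ms' e \<le> ms' y" using cB same AB(1) ms'e by auto
    moreover have "\<forall>x\<in>set A. \<forall>y\<in>set (e # B). ms' x \<le> ms' y" using Ac sAB same AB(1) ms'e by auto
    ultimately show ?thesis by (simp add: sorted_wrt_append)
  qed
  have p4: "\<forall>k<length (A @ e # B). \<forall>D T. D \<subseteq> set (take (Suc k) (A @ e # B)) \<and> (A @ e # B) ! k \<in> D \<and> okTD L T D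
       \<longrightarrow> card T \<le> ms' ((A @ e # B) ! k)"
  proof (intro allI impI)
    fix k D T
    assume k: "k < length (A @ e # B)" and H: "D \<subseteq> set (take (Suc k) (A @ e # B)) \<and> (A @ e # B) ! k \<in> D \<and> okTD L T D"
    consider (lt) "k < length A" | (eq) "k = length A" | (gt) j where "k = length A + Suc j" "j < length B"
    proof -
      assume a1: "k < length A \<Longrightarrow> thesis" and a2: "k = length A \<Longrightarrow> thesis"
        and a3: "\<And>j. k = length A + Suc j \<Longrightarrow> j < length B \<Longrightarrow> thesis"
      show thesis
      proof (cases "k < length A")
        case True then show ?thesis using a1 by blast
      next
        case False
        show ?thesis
        proof (cases "k = length A")
          case True then show ?thesis using a2 by blast
        next
          case F2: False
          have "k = length A + Suc (k - length A - 1)" using False F2 by arith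
          moreover have "k - length A - 1 < length B" using k False F2 by simp
          ultimately show ?thesis using a3 by blast
        qed
      qed
    qed
    then show "card T \<le> ms' ((A @ e # B) ! k)"
    proof cases
      case lt
      have "take (Suc k) (A @ e # B) = take (Suc k) xs" using lt AB(1) by simp
      moreover have "(A @ e # B) ! k = xs ! k" using lt AB(1) by (simp add: nth_append)
      moreover have "k < length xs" using lt AB(1) by simp
      ultimately have "card T \<le> ms (xs ! k)" using jxs H by metis
      moreover have "xs ! k \<in> set xs" using \<open>k < length xs\<close> by simp
      ultimately show ?thesis using same \<open>(A @ e # B) ! k = xs ! k\<close> by simp
    next
      case eq
      then have "D \<subseteq> set (A @ [e])" "e \<in> D" using H by auto
      then have "card T \<le> mchk L (A @ [e])" using mchk_ge[of "A @ [e]" D L T] H by simp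
      then show ?thesis using eq ms'e AB(4) by simp
    next
      case (gt j)
      have tk: "take (Suc k) (A @ e # B) = A @ e # take (Suc j) B" using gt by simp
      have nk: "(A @ e # B) ! k = B ! j" using gt by (simp add: nth_append)
      have bj: "B ! j \<in> set xs" using gt AB(1) by simp
      have HD: "D \<subseteq> set (take (Suc k) (A @ e # B))" using H by blast
      then have HD2: "D \<subseteq> set (A @ e # take (Suc j) B)" by (simp only: tk)
      show ?thesis
      proof (cases "e \<in> D")
        case True
        have "D \<subseteq> set (A @ take (Suc j) B @ [e])" using HD2 by auto
        then have "card T \<le> mchk L (A @ take (Suc j) B @ [e])"
          using mchk_ge[of "A @ take (Suc j) B @ [e]" D L T] H True by simp
        also have "\<dots> \<le> ms (B ! j)" using AB(6) gt by simp
        finally show ?thesis using nk same bj by simp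
      next
        case False
        have tk2: "take (Suc (length A + j)) xs = A @ take (Suc j) B" using AB(1) by simp
        have nk2: "xs ! (length A + j) = B ! j" using AB(1) by (simp add: nth_append)
        have "D \<subseteq> set (take (Suc (length A + j)) xs)" unfolding tk2 using HD2 False by auto
        moreover have "length A + j < length xs" using AB(1) gt by simp
        ultimately have "card T \<le> ms (B ! j)" using jxs H nk nk2 by metis
        then show ?thesis using nk same bj by simp
      qed
    qed
  qed
  show ?case using p1 p2 p3 p4 AB(2,3) unfolding ms'_def e_def by simp
qed



definition mst :: "(nat \<Rightarrow> 'u set) \<Rightarrow> nat \<times> nat \<Rightarrow> nat" where
  "mst L p = mstar L (fst p) (snd p)"

lemma ms_at_Suc: "\<exists>c. ms_at L (Suc l) = (ms_at L l)(diag l := c)"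
  using step_spec[of L l] by blast

lemma ms_stable0: "ms_at L (Suc l0 + d) (diag l0) = ms_at L (Suc l0) (diag l0)"
proof (induction d)
  case 0 then show ?case by simp
next
  case (Suc d)
  have "diag (Suc l0 + d) \<noteq> diag l0" using diag_inj by (simp add: inj_eq)
  then show ?case using ms_at_Suc[of L "Suc l0 + d"] Suc by auto
qed

lemma ms_stable: "l0 < l \<Longrightarrow> ms_at L l (diag l0) = ms_at L (Suc l0) (diag l0)"
  using ms_stable0[of L l0 "l - Suc l0"] by simp

lemma mst_diag: "mst L (diag l) = ms_at L (Suc l) (diag l)"
proof -
  have "(LEAST l'. diag l' = (fst (diag l), snd (diag l))) = l"
    by (rule Least_equality) (use diag_inj in \<open>auto simp: inj_eq\<close>)
  then show ?thesis by (simp add: mst_def mstar_def ms_at_def)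
qed

lemma in_xs: "f \<in> set (xs_at L l) \<Longrightarrow> ms_at L l f = mst L f"
proof -
  assume "f \<in> set (xs_at L l)"
  then obtain l0 where "l0 < l" "f = diag l0" using inv[of L l] by auto
  then show ?thesis using ms_stable mst_diag by metis
qed

lemma F1:
  assumes "finite D" "D \<noteq> {}" "\<forall>p\<in>D. snd p \<ge> 1" "okTD L T D"
  shows "\<exists>f\<in>D. card T \<le> mst L f"
proof -
  have "\<forall>p\<in>D. \<exists>l. diag l = p"
  proof
    fix p assume "p \<in> D"
    then have "snd p \<ge> 1" using assms(3) by blast
    then obtain l where "diag l = (fst p, snd p)" using diag_surj by blast
    then show "\<exists>l. diag l = p" by auto
  qed
  then have "\<exists>g. \<forall>p\<in>D. diag (g p) = p" by (rule bchoice)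
  then obtain g where g: "\<forall>p\<in>D. diag (g p) = p" by (elim exE)
  define l where "l = Suc (Max (g ` D))"
  have gl: "\<forall>p\<in>D. g p < l"
  proof
    fix p assume "p \<in> D"
    then have "g p \<le> Max (g ` D)" using assms(1) by (intro Max_ge) auto
    then show "g p < l" by (simp add: l_def)
  qed
  have setl: "set (xs_at L l) = diag ` {..<l}" using inv[of L l] by blast
  have Dsub: "D \<subseteq> set (xs_at L l)"
  proof
    fix p assume p: "p \<in> D"
    then have "p = diag (g p)" "g p \<in> {..<l}" using g gl by auto
    then show "p \<in> set (xs_at L l)" unfolding setl by (metis imageI)
  qed
  define xs where "xs = xs_at L l"
  define K where "K = {k. k < length xs \<and> xs ! k \<in> D}"
  have fK: "finite K" by (auto simp: K_def)
  obtain p0 where "p0 \<in> D" using assms(2) by blast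
  then have "p0 \<in> set xs" using Dsub by (auto simp: xs_def)
  then obtain k' where "k' < length xs" "xs ! k' = p0" by (auto simp: in_set_conv_nth)
  then have neK: "K \<noteq> {}" using \<open>p0 \<in> D\<close> by (auto simp: K_def)
  define k0 where "k0 = Max K"
  have k0K: "k0 \<in> K" using fK neK by (simp add: k0_def)
  have "D \<subseteq> set (take (Suc k0) xs)"
  proof
    fix p assume "p \<in> D"
    then have "p \<in> set xs" using Dsub by (auto simp: xs_def)
    then obtain k where k: "k < length xs" "xs ! k = p" by (auto simp: in_set_conv_nth)
    then have "k \<in> K" using \<open>p \<in> D\<close> by (auto simp: K_def)
    then have "k \<le> k0" using fK by (simp add: k0_def)
    then show "p \<in> set (take (Suc k0) xs)" using k by (auto simp: in_set_conv_nth)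
  qed
  moreover have "k0 < length xs" "xs ! k0 \<in> D" using k0K by (auto simp: K_def)
  moreover note J = inv[of L l, THEN conjunct2, THEN conjunct2, THEN conjunct2]
  ultimately have "card T \<le> ms_at L l (xs ! k0)" using J[rule_format, of k0 D T] assms(4) unfolding xs_def by blast
  moreover have "ms_at L l (xs ! k0) = mst L (xs ! k0)" using in_xs[of "xs ! k0" L l] \<open>k0 < length xs\<close> unfolding xs_def by (simp add: nth_mem)
  ultimately show ?thesis using \<open>xs ! k0 \<in> D\<close> by auto
qed

lemma F2:
  assumes "0 < mst L (diag l0)"
  shows "\<exists>T D. diag l0 \<in> D \<and> (\<forall>p\<in>D. snd p \<ge> 1) \<and> okTD L T D \<and> card T = mst L (diag l0) \<and>
     (\<Inter>p\<in>D. L (snd p)) \<subseteq> T \<and> (\<forall>f\<in>D. f \<noteq> diag l0 \<longrightarrow> mst L f < mst L (diag l0))"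
proof -
  define e where "e = diag l0"
  define xs where "xs = xs_at L l0"
  define ms where "ms = ms_at L l0"
  obtain A B c where AB: "xs = A @ B" "xs_at L (Suc l0) = A @ e # B" "ms_at L (Suc l0) = ms(e := c)"
     "c = mchk L (A @ [e])" "A \<noteq> [] \<longrightarrow> ms (last A) < c"
    using step_spec[of L l0] unfolding xs_def ms_def e_def by blast
  have me: "mst L e = c" using mst_diag[of L l0] AB(3) by (simp add: e_def)
  then have "0 < mchk L (A @ [e])" using assms AB(4) e_def by simp
  then obtain T D where TD: "D \<subseteq> set (A @ [e])" "last (A @ [e]) \<in> D" "okTD L T D" "card T = mchk L (A @ [e])"
    using mchk_obtain[of L "A @ [e]"] by blast
  define T' where "T' = T \<union> (\<Inter>p\<in>D. L (snd p))"
  have fT': "finite T'" using TD(3) by (simp add: T'_def okTD_def)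
  have "\<forall>p\<in>D. T' - L (snd p) = T - L (snd p)" by (auto simp: T'_def)
  then have "okTD L T' D" using TD(3) fT' by (simp add: okTD_def)
  then have "card T' \<le> card T" using mchk_ge[of "A @ [e]" D L T'] TD by simp
  moreover have "card T \<le> card T'" by (rule card_mono[OF fT']) (auto simp: T'_def)
  ultimately have "T = T'" using fT' by (intro card_subset_eq) (auto simp: T'_def)
  then have inter: "(\<Inter>p\<in>D. L (snd p)) \<subseteq> T" by (auto simp: T'_def)
  have sxs: "sorted_wrt (\<lambda>a b. ms a \<le> ms b) xs" using inv[of L l0] by (simp add: xs_def ms_def)
  have setxs: "set xs = diag ` {..<l0}" using inv[of L l0] by (simp add: xs_def)
  have less: "\<forall>f\<in>D. f \<noteq> e \<longrightarrow> mst L f < mst L e"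
  proof (intro ballI impI)
    fix f assume f: "f \<in> D" "f \<noteq> e"
    then have fA: "f \<in> set A" using TD(1) by auto
    have "sorted_wrt (\<lambda>a b. ms a \<le> ms b) A" using sxs AB(1) by (simp add: sorted_wrt_append)
    then have "ms f \<le> ms (last A)" using sorted_last[of "\<lambda>a b. ms a \<le> ms b" A f] fA by simp
    moreover have "ms (last A) < c" using AB(5) fA by auto
    moreover have "ms f = mst L f" using in_xs[of f L l0] fA AB(1) by (simp add: xs_def ms_def)
    ultimately show "mst L f < mst L e" using me by simp
  qed
  have snd1: "\<forall>p\<in>D. snd p \<ge> 1"
  proof
    fix p assume "p \<in> D"
    then have "p \<in> insert e (set xs)" using TD(1) AB(1) by auto
    then show "snd p \<ge> 1" using setxs diag_snd e_def by auto
  qed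
  have "mst L e = card T" using me TD(4) AB(4) by simp
  moreover have "e \<in> D" using TD(2) by simp
  ultimately show ?thesis using TD(3) inter less snd1 unfolding e_def[symmetric]
    by (intro exI[of _ T] exI[of _ D]) simp
qed



lemma gen_ok_mono: "gen_ok G K n k \<Longrightarrow> k \<le> k' \<Longrightarrow> gen_ok G K n k'"
  unfolding gen_ok_def by (meson order_trans)

lemma gt_ok: "gen_time G L n i \<le> enat k \<Longrightarrow> gen_ok G (L i) n k"
proof -
  assume h: "gen_time G L n i \<le> enat k"
  then have ex: "\<exists>k. gen_ok G (L i) n k" unfolding gen_time_def by (auto split: if_splits)
  then have "gen_time G L n i = enat (LEAST k. gen_ok G (L i) n k)" unfolding gen_time_def by simp
  then have "(LEAST k. gen_ok G (L i) n k) \<le> k" using h by simp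
  moreover have "gen_ok G (L i) n (LEAST k. gen_ok G (L i) n k)" using ex by (rule LeastI_ex)
  ultimately show ?thesis using gen_ok_mono by blast
qed

lemma prefix_enum:
  assumes "countable (UNIV :: 'u set)" "infinite K" "distinct xs" "xs \<noteq> []"
    "card (set xs - K) \<le> a" "gen_ok G K a (card (set xs))"
  shows "G xs \<in> K - set (xs :: 'u list)"
proof -
  define x where "x t = (if t < length xs then xs ! t else from_nat_into K (t - length xs))" for t
  have Kne: "K \<noteq> {}" using assms(2) by (metis finite.emptyI)
  have cK: "countable K" using countable_subset[OF subset_UNIV assms(1)] .
  have rK: "range (from_nat_into K) = K" using Kne cK by simp
  have "K \<subseteq> range x"
  proof
    fix y assume "y \<in> K"
    then obtain k where "y = from_nat_into K k" using rK by (metis rangeE)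
    then have "x (length xs + k) = y" by (simp add: x_def)
    then show "y \<in> range x" by (metis rangeI)
  qed
  moreover have eqs: "{t. x t \<notin> K} = {t. t < length xs \<and> xs ! t \<notin> K}"
    using from_nat_into[OF Kne] by (auto simp: x_def)
  moreover have "card {t. t < length xs \<and> xs ! t \<notin> K} = card (set xs - K)"
  proof -
    have "(\<lambda>t. xs ! t) ` {t. t < length xs \<and> xs ! t \<notin> K} = set xs - K"
      by (auto simp: in_set_conv_nth)
    moreover have "inj_on (\<lambda>t. xs ! t) {t. t < length xs \<and> xs ! t \<notin> K}"
      using inj_on_nth[OF assms(3)] by auto
    ultimately show ?thesis by (metis card_image)
  qed
  ultimately have en: "enumeration K a x" using assms(5) by (simp add: enumeration_def)
  have xi: "x ` {..<length xs} = set xs"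
    by (auto simp: x_def in_set_conv_nth)
  have mx: "map x [0..<length xs] = xs"
    by (rule nth_equalityI) (auto simp: x_def)
  have all: "\<forall>t\<ge>1. card (set xs) \<le> card (x ` {..<t}) \<longrightarrow> G (map x [0..<t]) \<in> K - x ` {..<t}"
    using assms(6) en unfolding gen_ok_def by blast
  have l1: "1 \<le> length xs" using assms(4) by (cases xs) auto
  have "card (set xs) \<le> card (x ` {..<length xs})" using xi by simp
  then have "G (map x [0..<length xs]) \<in> K - x ` {..<length xs}"
    using all[rule_format, OF l1] by blast
  then show ?thesis using mx xi by simp
qed



lemma set_minus_nth: "set xs - K = (\<lambda>t. xs ! t) ` {t. t < length xs \<and> xs ! t \<notin> K}"
  by (auto simp: in_set_conv_nth)

lemma card_set_minus_nth: "card (set xs - K) \<le> card {t. t < length xs \<and> xs ! t \<notin> K}"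
proof -
  have "finite {t. t < length xs \<and> xs ! t \<notin> K}" by simp
  then have "card ((\<lambda>t. xs ! t) ` {t. t < length xs \<and> xs ! t \<notin> K}) \<le> card {t. t < length xs \<and> xs ! t \<notin> K}"
    by (rule card_image_le)
  then show ?thesis by (simp only: set_minus_nth[symmetric])
qed

theorem mainTheorem7:
  fixes L :: "nat \<Rightarrow> 'u set"
  assumes "countable (UNIV :: 'u set)" and "infinite (UNIV :: 'u set)"
    and "\<And>i. i \<ge> 1 \<Longrightarrow> infinite (L i)"
    and "\<And>t. finite {(n', j). j \<ge> 1 \<and> mstar L n' j + 1 \<le> t}"
  shows "\<exists>(G :: 'u list \<Rightarrow> 'u) tm. generates_with L G tm \<and> pareto_optimal L tm"
proof -
  define tm where "tm n i = (if mstar L n i = 0 then 0 else mstar L n i + 1)" for n i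
  define noise where "noise xs K = card {t. t < length xs \<and> xs ! t \<notin> K}" for xs :: "'u list" and K
  define Act where "Act xs = {(n', j). j \<ge> 1 \<and> noise xs (L j) \<le> n' \<and> tm n' j \<le> card (set xs)}" for xs
  define G where "G xs = (SOME y. y \<notin> set xs \<and> (\<forall>p\<in>Act xs. y \<in> L (snd p)))" for xs
  have ex: "\<exists>y. y \<notin> set xs \<and> (\<forall>p\<in>Act xs. y \<in> L (snd p))" if ne: "xs \<noteq> []" for xs
  proof (rule ccontr)
    assume nex: "\<not> ?thesis"
    define S where "S = set xs"
    define I where "I = (\<Inter>p\<in>Act xs. L (snd p))"
    have IS: "I \<subseteq> S" using nex by (auto simp: I_def S_def)
    have fS: "finite S" by (simp add: S_def)
    have sge: "card S \<ge> 1" using ne by (simp add: S_def Suc_le_eq card_gt_0_iff)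
    have "Act xs \<subseteq> {(n', j). j \<ge> 1 \<and> mstar L n' j + 1 \<le> card S + 1}"
    proof
      fix p assume "p \<in> Act xs"
      then obtain a b where p: "p = (a, b)" "b \<ge> 1" "tm a b \<le> card S" by (auto simp: Act_def S_def)
      then have "mstar L a b + 1 \<le> card S + 1" by (cases "mstar L a b = 0") (auto simp: tm_def)
      then show "p \<in> {(n', j). j \<ge> 1 \<and> mstar L n' j + 1 \<le> card S + 1}" using p by simp
    qed
    then have fA: "finite (Act xs)" using assms(4) finite_subset by blast
    have neA: "Act xs \<noteq> {}"
    proof
      assume "Act xs = {}"
      then have "I = UNIV" by (simp add: I_def)
      then show False using IS fS assms(2) finite_subset by blast
    qed
    have fI: "finite I" using IS fS finite_subset by blast
    have ok: "okTD L S (Act xs)"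
      unfolding okTD_def
    proof (intro conjI ballI)
      show "finite S" by (rule fS)
      show "finite (\<Inter>p\<in>Act xs. L (snd p))" using fI by (simp add: I_def)
      fix p assume pA: "p \<in> Act xs"
      have "card (S - L (snd p)) \<le> noise xs (L (snd p))"
        unfolding noise_def S_def by (rule card_set_minus_nth)
      also have "\<dots> \<le> fst p" using pA by (auto simp: Act_def)
      finally show "card (S - L (snd p)) \<le> fst p" .
    qed
    have "\<forall>p\<in>Act xs. snd p \<ge> 1" by (auto simp: Act_def)
    then have "\<exists>f\<in>Act xs. card S \<le> mst L f" by (rule F1[OF fA neA _ ok])
    then obtain f where f: "f \<in> Act xs" "card S \<le> mst L f" by blast
    have "f \<in> {(n', j). j \<ge> 1 \<and> noise xs (L j) \<le> n' \<and> tm n' j \<le> card (set xs)}" using f(1) unfolding Act_def .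
    then have "tm (fst f) (snd f) \<le> card S" by (cases f) (simp add: S_def)
    moreover have "mstar L (fst f) (snd f) \<ge> 1" using f(2) sge by (simp add: mst_def)
    ultimately show False using f(2) by (simp add: tm_def mst_def)
  qed
  have Gok: "G xs \<notin> set xs \<and> (\<forall>p\<in>Act xs. G xs \<in> L (snd p))" if "xs \<noteq> []" for xs
    unfolding G_def using someI_ex[OF ex[OF that]] .
  have gw: "generates_with L G tm"
    unfolding generates_with_def gen_ok_def
  proof (intro allI impI)
    fix n i x t
    assume i: "i \<ge> 1" and en: "enumeration (L i) n x" and t: "1 \<le> t" and c: "tm n i \<le> card (x ` {..<t})"
    define xs where "xs = map x [0..<t]"
    have sx: "set xs = x ` {..<t}" by (simp add: xs_def atLeast0LessThan)
    have ne: "xs \<noteq> []" using t by (simp add: xs_def)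
    have "{k. k < length xs \<and> xs ! k \<notin> L i} \<subseteq> {k. x k \<notin> L i}" by (auto simp: xs_def)
    then have "noise xs (L i) \<le> card {k. x k \<notin> L i}"
      unfolding noise_def by (rule card_mono[rotated]) (use en in \<open>simp add: enumeration_def\<close>)
    also have "\<dots> \<le> n" using en by (simp add: enumeration_def)
    finally have "(n, i) \<in> Act xs" using i c sx unfolding Act_def by simp
    then have "G xs \<in> L (snd (n, i))" using Gok[OF ne] by blast
    then have "G xs \<in> L i" by simp
    moreover have "G xs \<notin> set xs" using Gok[OF ne] by blast
    ultimately have "G xs \<in> L i" "G xs \<notin> set xs" by blast+
    then show "G (map x [0..<t]) \<in> L i - x ` {..<t}" using sx by (simp add: xs_def)
  qed
  have po: "pareto_optimal L tm"
    unfolding pareto_optimal_def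
  proof (intro allI impI)
    fix G' :: "'u list \<Rightarrow> 'u" and n i
    assume H: "noisy_generates L G' \<and> i \<ge> 1 \<and> gen_time G' L n i < enat (tm n i)"
    show "\<exists>n' j. j \<ge> 1 \<and> (n', j) \<noteq> (n, i) \<and> gen_time G' L n' j > enat (tm n' j)"
    proof (rule ccontr)
      assume "\<not> ?thesis"
      note A = this
      have nn: "\<not> (j \<ge> 1 \<and> (n', j) \<noteq> (n, i) \<and> gen_time G' L n' j > enat (tm n' j))" for n' j
      proof
        assume X: "j \<ge> 1 \<and> (n', j) \<noteq> (n, i) \<and> gen_time G' L n' j > enat (tm n' j)"
        show False
          apply (rule notE[OF A])
          apply (rule exI[of _ n'])
          apply (rule exI[of _ j])
          by (rule X)
      qed
      have oth: "gen_ok G' (L j) n' (tm n' j)" if "j \<ge> 1" "(n', j) \<noteq> (n, i)" for n' j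
      proof -
        have "\<not> gen_time G' L n' j > enat (tm n' j)" using nn[of j n'] that by auto
        then have "gen_time G' L n' j \<le> enat (tm n' j)" by (rule leI)
        then show ?thesis by (rule gt_ok)
      qed
      have i1: "i \<ge> 1" using H by simp
      have tpos: "tm n i > 0"
      proof (rule ccontr)
        assume "\<not> tm n i > 0"
        then have "tm n i = 0" by simp
        then have "gen_time G' L n i < 0" using H by (simp add: zero_enat_def)
        then show False by simp
      qed
      then have mpos: "mstar L n i > 0" by (simp add: tm_def split: if_splits)
      then have "gen_time G' L n i \<le> enat (mstar L n i)" using H
        by (cases "gen_time G' L n i") (auto simp: tm_def)
      then have oke: "gen_ok G' (L i) n (mstar L n i)" by (rule gt_ok)
      obtain l0 where l0: "diag l0 = (n, i)" using diag_surj[OF i1] by blast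
      have "0 < mst L (diag l0)" using mpos l0 by (simp add: mst_def)
      from F2[OF this] obtain T D where TD: "diag l0 \<in> D" "\<forall>p\<in>D. snd p \<ge> 1" "okTD L T D"
        "card T = mst L (diag l0)" "(\<Inter>p\<in>D. L (snd p)) \<subseteq> T" "\<forall>f\<in>D. f \<noteq> diag l0 \<longrightarrow> mst L f < mst L (diag l0)"
        by blast
      have cT: "card T = mstar L n i" using TD(4) l0 by (simp add: mst_def)
      have fT: "finite T" using TD(3) by (simp add: okTD_def)
      obtain xs where xs: "set xs = T" "distinct xs" using finite_distinct_list[OF fT] by blast
      have ne: "xs \<noteq> []" using xs cT mpos by auto
      have allin: "G' xs \<in> L (snd p) - T" if pD: "p \<in> D" for p
      proof -
        have okp: "gen_ok G' (L (snd p)) (fst p) (card T)"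
        proof (cases "p = (n, i)")
          case True
          then show ?thesis using oke cT by simp
        next
          case False
          have "gen_ok G' (L (snd p)) (fst p) (tm (fst p) (snd p))"
            using oth[of "snd p" "fst p"] TD(2) pD False by simp
          moreover have "tm (fst p) (snd p) \<le> card T"
          proof -
            have "mst L p < mst L (diag l0)" using TD(6) pD False l0 by simp
            then show ?thesis using TD(4) by (simp add: tm_def mst_def)
          qed
          ultimately show ?thesis by (rule gen_ok_mono)
        qed
        have "infinite (L (snd p))" using assms(3) TD(2) pD by blast
        moreover have "card (set xs - L (snd p)) \<le> fst p" using TD(3) pD xs(1) by (simp add: okTD_def)
        ultimately show ?thesis using prefix_enum[OF assms(1) _ xs(2) ne, of "L (snd p)" "fst p" G'] okp xs(1)
          by simp
      qed
      have "G' xs \<in> (\<Inter>p\<in>D. L (snd p))" using allin by blast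
      then have "G' xs \<in> T" using TD(5) by blast
      moreover have "G' xs \<notin> T" using allin TD(1) by blast
      ultimately show False by blast
    qed
  qed
  show ?thesis using gw po by blast
qed

end
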